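(* If $G$ is a finitely generated profinite group and $H<G$ is a subgroup of finite index, then every epimorphism $\alpha: G\to H$ has finite kernel; in particular, if $G$ has no non-trivial finite normal subgroup then $\alpha$ is injective.
   Context: Finitely generated means topologically finitely generated. Epimorphism means a surjective (continuous) homomorphism. *)

theory Defs
  imports "HOL-Analysis.Analysis" "HOL-Algebra.Algebra"
begin

definition topological_group :: "('a, 'm) monoid_scheme \<Rightarrow> 'a topology \<Rightarrow> bool" where
  "topological_group G T \<longleftrightarrow> group G \<and> topspace T = carrier G
     \<and> continuous_map (prod_topology T T) T (\<lambda>(x, y). x \<otimes>\<^bsub>G\<^esub> y)
     \<and> continuous_map T T (\<lambda>x. inv\<^bsub>G\<^esub> x)"

definition totally_disconnected_space :: "'a topology \<Rightarrow> bool" where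
  "totally_disconnected_space T \<longleftrightarrow>
     (\<forall>x \<in> topspace T. connected_component_of_set T x = {x})"

definition profinite_group :: "('a, 'm) monoid_scheme \<Rightarrow> 'a topology \<Rightarrow> bool" where
  "profinite_group G T \<longleftrightarrow> topological_group G T \<and> compact_space T
     \<and> Hausdorff_space T \<and> totally_disconnected_space T"

definition topologically_fg :: "('a, 'm) monoid_scheme \<Rightarrow> 'a topology \<Rightarrow> bool" where
  "topologically_fg G T \<longleftrightarrow>
     (\<exists>S. finite S \<and> S \<subseteq> carrier G \<and> T closure_of (generate G S) = carrier G)"

end

theory Submission
  imports Defs
begin

locale cgrp = group G for G :: "('a, 'b) monoid_scheme" (structure) +
  fixes T :: "'a topology"
  assumes top: "topspace T = carrier G"
    and mult_cont: "continuous_map (prod_topology T T) T (\<lambda>(x, y). x \<otimes> y)"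
    and inv_cont: "continuous_map T T (\<lambda>x. inv x)"
    and cpt: "compact_space T"
begin

lemma openin_finite_Inter_pts:
  assumes "finite I" "\<And>i. i \<in> I \<Longrightarrow> openin Y (A i)"
  shows "openin Y {x \<in> topspace Y. \<forall>i\<in>I. x \<in> A i}"
  using assms
proof (induction I rule: finite_induct)
  case empty
  then show ?case by simp
next
  case (insert a I)
  have "{x \<in> topspace Y. \<forall>i\<in>insert a I. x \<in> A i} = A a \<inter> {x \<in> topspace Y. \<forall>i\<in>I. x \<in> A i}"
    using openin_subset[OF insert.prems[of a]] by auto
  then show ?case using insert by (simp add: openin_Int)
qed

lemma rmult_cont: "a \<in> carrier G \<Longrightarrow> continuous_map T T (\<lambda>x. x \<otimes> a)"
proof -
  assume a: "a \<in> carrier G"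
  have "continuous_map T (prod_topology T T) (\<lambda>x. (x, a))"
    using a top by (simp add: continuous_map_pairwise o_def)
  from continuous_map_compose[OF this mult_cont] show ?thesis by (simp add: o_def)
qed

lemma lmult_cont: "a \<in> carrier G \<Longrightarrow> continuous_map T T (\<lambda>x. a \<otimes> x)"
proof -
  assume a: "a \<in> carrier G"
  have "continuous_map T (prod_topology T T) (\<lambda>x. (a, x))"
    using a top by (simp add: continuous_map_pairwise o_def)
  from continuous_map_compose[OF this mult_cont] show ?thesis by (simp add: o_def)
qed

lemma open_rcos:
  assumes "openin T U" "a \<in> carrier G"
  shows "openin T (U #> a)"
proof -
  have U: "U \<subseteq> carrier G" using openin_subset[OF assms(1)] top by simp
  have "U #> a = {x \<in> topspace T. x \<otimes> inv a \<in> U}"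
  proof (intro equalityI subsetI)
    fix x assume "x \<in> U #> a"
    then obtain u where u: "u \<in> U" "x = u \<otimes> a" unfolding r_coset_def by auto
    then show "x \<in> {x \<in> topspace T. x \<otimes> inv a \<in> U}"
      using U assms(2) top by (auto simp: m_assoc)
  next
    fix x assume "x \<in> {x \<in> topspace T. x \<otimes> inv a \<in> U}"
    then have x: "x \<in> carrier G" "x \<otimes> inv a \<in> U" using top by auto
    then have "x = (x \<otimes> inv a) \<otimes> a" using assms(2) by (simp add: m_assoc)
    then show "x \<in> U #> a" using x unfolding r_coset_def by blast
  qed
  moreover have "openin T {x \<in> topspace T. x \<otimes> inv a \<in> U}"
    using openin_continuous_map_preimage[OF rmult_cont assms(1)] assms(2) by simp
  ultimately show ?thesis by simp
qed

lemma open_lcos: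
  assumes "openin T U" "a \<in> carrier G"
  shows "openin T (a <# U)"
proof -
  have U: "U \<subseteq> carrier G" using openin_subset[OF assms(1)] top by simp
  have "a <# U = {x \<in> topspace T. inv a \<otimes> x \<in> U}"
  proof (intro equalityI subsetI)
    fix x assume "x \<in> a <# U"
    then obtain u where u: "u \<in> U" "x = a \<otimes> u" unfolding l_coset_def by auto
    then show "x \<in> {x \<in> topspace T. inv a \<otimes> x \<in> U}"
      using U assms(2) top by (auto simp: m_assoc[symmetric])
  next
    fix x assume "x \<in> {x \<in> topspace T. inv a \<otimes> x \<in> U}"
    then have x: "x \<in> carrier G" "inv a \<otimes> x \<in> U" using top by auto
    then have "x = a \<otimes> (inv a \<otimes> x)" using assms(2) by (simp add: m_assoc[symmetric])
    then show "x \<in> a <# U" using x unfolding l_coset_def by blast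
  qed
  moreover have "openin T {x \<in> topspace T. inv a \<otimes> x \<in> U}"
    using openin_continuous_map_preimage[OF lmult_cont assms(1)] assms(2) by simp
  ultimately show ?thesis by simp
qed

definition idx :: "'a set \<Rightarrow> nat \<Rightarrow> bool" where
  "idx U n \<longleftrightarrow> (\<exists>R. finite R \<and> card R \<le> n \<and> R \<subseteq> carrier G \<and> carrier G = (\<Union>r\<in>R. U #> r))"

lemma open_subgroup_idx:
  assumes "subgroup U G" "openin T U"
  shows "\<exists>n. idx U n"
proof -
  have "compactin T (topspace T)" using cpt by (simp add: compact_space_def)
  then have "\<exists>F. finite F \<and> F \<subseteq> (\<lambda>r. U #> r) ` carrier G \<and> topspace T \<subseteq> \<Union>F"
    unfolding compactin_def
  proof (elim conjE allE impE)
    show "(\<forall>x\<in>(\<lambda>r. U #> r) ` carrier G. openin T x) \<and> topspace T \<subseteq> \<Union>((\<lambda>r. U #> r) ` carrier G)"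
      using open_rcos[OF assms(2)] top rcos_self[OF _ assms(1)] by auto
  qed auto
  then obtain F where F: "finite F" "F \<subseteq> (\<lambda>r. U #> r) ` carrier G" "topspace T \<subseteq> \<Union>F" by blast
  then obtain R where R: "R \<subseteq> carrier G" "finite R" "F = (\<lambda>r. U #> r) ` R"
    by (meson finite_subset_image)
  have "carrier G = (\<Union>r\<in>R. U #> r)"
  proof
    show "carrier G \<subseteq> (\<Union>r\<in>R. U #> r)" using F R top by auto
    show "(\<Union>r\<in>R. U #> r) \<subseteq> carrier G"
      using R subgroup.subset[OF assms(1)] r_coset_subset_G by blast
  qed
  then show ?thesis unfolding idx_def using R by blast
qed

lemma open_subgroup_closed:
  assumes "subgroup U G" "openin T U"
  shows "closedin T U"
proof -
  have "topspace T - U = (\<Union>r\<in>carrier G - U. U #> r)"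
  proof (intro equalityI subsetI)
    fix x assume "x \<in> topspace T - U"
    then show "x \<in> (\<Union>r\<in>carrier G - U. U #> r)" using rcos_self[OF _ assms(1)] top by auto
  next
    fix x assume "x \<in> (\<Union>r\<in>carrier G - U. U #> r)"
    then obtain r where r: "r \<in> carrier G" "r \<notin> U" "x \<in> U #> r" by auto
    then obtain u where u: "u \<in> U" "x = u \<otimes> r" unfolding r_coset_def by auto
    have uc: "u \<in> carrier G" using u subgroup.subset[OF assms(1)] by auto
    have "x \<in> carrier G" using u uc r by auto
    moreover have "x \<notin> U"
    proof
      assume "x \<in> U"
      then have "inv u \<otimes> x \<in> U" using u subgroup.m_inv_closed[OF assms(1)] subgroup.m_closed[OF assms(1)] by auto
      moreover have "inv u \<otimes> x = r" using u uc r by (simp add: m_assoc[symmetric])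
      ultimately show False using r by simp
    qed
    ultimately show "x \<in> topspace T - U" using top by simp
  qed
  moreover have "openin T (\<Union>r\<in>carrier G - U. U #> r)"
    using open_rcos[OF assms(2)] by auto
  ultimately show ?thesis unfolding closedin_def using openin_subset[OF assms(2)] by simp
qed


lemma clopen_sep:
  assumes "Hausdorff_space T" "totally_disconnected_space T" "g \<in> carrier G" "g \<noteq> \<one>"
  shows "\<exists>C. closedin T C \<and> openin T C \<and> \<one> \<in> C \<and> g \<notin> C"
proof -
  have q: "quasi_component_of T \<one> g = connected_component_of T \<one> g"
    using quasi_eq_connected_component_of[of T] cpt assms(1) by auto
  have "connected_component_of_set T \<one> = {\<one>}"
    using assms(2) top unfolding totally_disconnected_space_def by auto
  then have "\<not> connected_component_of T \<one> g" using assms(4)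
    by (metis mem_Collect_eq singletonD)
  then have "\<not> quasi_component_of T \<one> g" using q by simp
  then obtain C where C: "closedin T C" "openin T C" "(\<one> \<in> C) \<noteq> (g \<in> C)"
    unfolding quasi_component_of_def using top assms(3) by auto
  show ?thesis
  proof (cases "\<one> \<in> C")
    case True
    then show ?thesis using C by blast
  next
    case False
    then have "g \<in> C" using C by simp
    moreover have "closedin T (topspace T - C)" "openin T (topspace T - C)"
      using C by (auto simp: closedin_diff openin_diff)
    ultimately show ?thesis using False top
      by (intro exI[of _ "topspace T - C"]) auto
  qed
qed

lemma small_nbhd:
  assumes "closedin T C" "openin T C" "\<one> \<in> C"
  shows "\<exists>W. openin T W \<and> \<one> \<in> W \<and> (\<forall>x\<in>C. \<forall>w\<in>W. x \<otimes> w \<in> C) \<and> (\<forall>w\<in>W. inv w \<in> W)"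
proof -
  define M where "M = {p \<in> topspace (prod_topology T T). (\<lambda>(x, y). x \<otimes> y) p \<in> C}"
  have M: "openin (prod_topology T T) M"
    unfolding M_def using openin_continuous_map_preimage[OF mult_cont assms(2)] .
  have Csub: "C \<subseteq> carrier G" using openin_subset[OF assms(2)] top by simp
  have ex: "\<forall>x\<in>C. \<exists>A B. openin T A \<and> openin T B \<and> x \<in> A \<and> \<one> \<in> B \<and> A \<times> B \<subseteq> M"
  proof
    fix x assume x: "x \<in> C"
    then have "(x, \<one>) \<in> M" unfolding M_def using Csub top by auto
    then show "\<exists>A B. openin T A \<and> openin T B \<and> x \<in> A \<and> \<one> \<in> B \<and> A \<times> B \<subseteq> M"
      using M openin_prod_topology_alt by metis
  qed
  then obtain A B where AB: "\<And>x. x \<in> C \<Longrightarrow> openin T (A x) \<and> openin T (B x) \<and> x \<in> A x \<and> \<one> \<in> B x \<and> A x \<times> B x \<subseteq> M"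
    by metis
  have "compactin T C" using closedin_compact_space[OF cpt assms(1)] .
  then have "\<exists>F. finite F \<and> F \<subseteq> A ` C \<and> C \<subseteq> \<Union>F"
    unfolding compactin_def
  proof (elim conjE allE impE)
    show "(\<forall>x\<in>A ` C. openin T x) \<and> C \<subseteq> \<Union>(A ` C)" using AB by blast
  qed auto
  then obtain F where F: "finite F" "F \<subseteq> A ` C" "C \<subseteq> \<Union>F" by blast
  then obtain P where P: "P \<subseteq> C" "finite P" "F = A ` P"
    by (meson finite_subset_image)
  define W0 where "W0 = {y \<in> topspace T. \<forall>x\<in>P. y \<in> B x}"
  have W0: "openin T W0" unfolding W0_def
    using openin_finite_Inter_pts[OF P(2), of T B] AB P(1) by blast
  define W where "W = {y \<in> topspace T. y \<in> W0 \<and> inv y \<in> W0}"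
  have "W = W0 \<inter> {y \<in> topspace T. inv y \<in> W0}" unfolding W_def by auto
  then have Wo: "openin T W"
    using openin_continuous_map_preimage[OF inv_cont W0] W0 by (simp add: openin_Int)
  have one: "\<one> \<in> W" unfolding W_def W0_def using AB P(1) top by auto
  have mul: "\<forall>x\<in>C. \<forall>w\<in>W. x \<otimes> w \<in> C"
  proof (intro ballI)
    fix x w assume x: "x \<in> C" and w: "w \<in> W"
    obtain p where p: "p \<in> P" "x \<in> A p" using F P x by auto
    have "w \<in> B p" using w p unfolding W_def W0_def by auto
    then have "(x, w) \<in> M" using AB[of p] p P(1) by blast
    then show "x \<otimes> w \<in> C" unfolding M_def by simp
  qed
  have sym: "\<forall>w\<in>W. inv w \<in> W"
    unfolding W_def using top by auto
  show ?thesis using Wo one mul sym by blast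
qed

lemma open_subgroup_in_clopen:
  assumes "closedin T C" "openin T C" "\<one> \<in> C"
  shows "\<exists>V. subgroup V G \<and> openin T V \<and> V \<subseteq> C"
proof -
  obtain W where W: "openin T W" "\<one> \<in> W" "\<forall>x\<in>C. \<forall>w\<in>W. x \<otimes> w \<in> C" "\<forall>w\<in>W. inv w \<in> W"
    using small_nbhd[OF assms] by blast
  have Wsub: "W \<subseteq> carrier G" using openin_subset[OF W(1)] top by simp
  have Csub: "C \<subseteq> carrier G" using openin_subset[OF assms(2)] top by simp
  define V where "V = generate G W"
  have sg: "subgroup V G" unfolding V_def using generate_is_subgroup[OF Wsub] .
  have "\<forall>x\<in>C. x \<otimes> v \<in> C" if "v \<in> V" for v
    using that unfolding V_def
  proof (induction v rule: generate.induct)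
    case one
    then show ?case using Csub by auto
  next
    case (incl h)
    then show ?case using W by auto
  next
    case (inv h)
    then show ?case using W by auto
  next
    case (eng h1 h2)
    have "h1 \<in> carrier G" "h2 \<in> carrier G"
      using eng.hyps generate_in_carrier[OF Wsub] by auto
    then show ?case using eng.IH Csub by (auto simp: m_assoc[symmetric])
  qed
  then have VC: "V \<subseteq> C" using assms(3) sg subgroup.subset by fastforce
  have "V = (\<Union>v\<in>V. v <# W)"
  proof (intro equalityI subsetI)
    fix v assume "v \<in> V"
    moreover have "v \<in> v <# W" using W(2) \<open>v \<in> V\<close> subgroup.subset[OF sg]
      unfolding l_coset_def by force
    ultimately show "v \<in> (\<Union>v\<in>V. v <# W)" by blast
  next
    fix y assume "y \<in> (\<Union>v\<in>V. v <# W)"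
    then obtain v w where "v \<in> V" "w \<in> W" "y = v \<otimes> w" unfolding l_coset_def by auto
    moreover have "w \<in> V" using \<open>w \<in> W\<close> unfolding V_def by (rule generate.incl)
    ultimately show "y \<in> V" using subgroup.m_closed[OF sg] by simp
  qed
  moreover have "openin T (\<Union>v\<in>V. v <# W)"
    using open_lcos[OF W(1)] subgroup.subset[OF sg] by blast
  ultimately have "openin T V" by simp
  then show ?thesis using sg VC by blast
qed

lemma conj_mult: "x \<in> carrier G \<Longrightarrow> a \<in> carrier G \<Longrightarrow> b \<in> carrier G \<Longrightarrow>
  x \<otimes> (a \<otimes> b) \<otimes> inv x = (x \<otimes> a \<otimes> inv x) \<otimes> (x \<otimes> b \<otimes> inv x)"
  by (simp add: m_assoc) (simp add: m_assoc[symmetric])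

lemma conj_inv: "x \<in> carrier G \<Longrightarrow> a \<in> carrier G \<Longrightarrow>
  x \<otimes> inv a \<otimes> inv x = inv (x \<otimes> a \<otimes> inv x)"
  by (simp add: m_assoc inv_mult_group)

lemma conj_conj: "x \<in> carrier G \<Longrightarrow> y \<in> carrier G \<Longrightarrow> a \<in> carrier G \<Longrightarrow>
  x \<otimes> (y \<otimes> a \<otimes> inv y) \<otimes> inv x = (x \<otimes> y) \<otimes> a \<otimes> inv (x \<otimes> y)"
  by (simp add: m_assoc inv_mult_group)

lemma normal_core_open:
  assumes "subgroup V G" "openin T V"
  shows "\<exists>N. N \<lhd> G \<and> openin T N \<and> N \<subseteq> V"
proof -
  define N where "N = {y \<in> carrier G. \<forall>x\<in>carrier G. x \<otimes> y \<otimes> inv x \<in> V}"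
  have Vsub: "V \<subseteq> carrier G" using subgroup.subset[OF assms(1)] .
  have NV: "N \<subseteq> V" unfolding N_def by (auto elim: ballE[where x = \<one>])
  have sgN: "subgroup N G"
  proof (rule subgroupI)
    show "N \<subseteq> carrier G" unfolding N_def by auto
    show "N \<noteq> {}"
    proof -
      have "\<one> \<in> N" unfolding N_def using subgroup.one_closed[OF assms(1)] by auto
      then show ?thesis by blast
    qed
  next
    fix a assume a: "a \<in> N"
    show "inv a \<in> N" unfolding N_def
      using a conj_inv subgroup.m_inv_closed[OF assms(1)] unfolding N_def by auto
  next
    fix a b assume a: "a \<in> N" and b: "b \<in> N"
    show "a \<otimes> b \<in> N" unfolding N_def
      using a b conj_mult subgroup.m_closed[OF assms(1)] unfolding N_def by auto
  qed
  have nN: "N \<lhd> G"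
    unfolding normal_inv_iff
  proof (intro conjI sgN ballI)
    fix x h assume x: "x \<in> carrier G" and h: "h \<in> N"
    have hc: "h \<in> carrier G" using h N_def by auto
    show "x \<otimes> h \<otimes> inv x \<in> N" unfolding N_def
    proof (intro CollectI conjI ballI)
      show "x \<otimes> h \<otimes> inv x \<in> carrier G" using x hc by auto
      fix y assume y: "y \<in> carrier G"
      have "y \<otimes> (x \<otimes> h \<otimes> inv x) \<otimes> inv y = (y \<otimes> x) \<otimes> h \<otimes> inv (y \<otimes> x)"
        using conj_conj x y hc by simp
      then show "y \<otimes> (x \<otimes> h \<otimes> inv x) \<otimes> inv y \<in> V" using h x y unfolding N_def by auto
    qed
  qed
  obtain n where "idx V n" using open_subgroup_idx[OF assms] by blast
  then obtain R where R: "finite R" "R \<subseteq> carrier G" "carrier G = (\<Union>r\<in>R. V #> r)"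
    unfolding idx_def by blast
  define Ar where "Ar = (\<lambda>r. {z \<in> topspace T. r \<otimes> z \<otimes> inv r \<in> V})"
  have Ao: "openin T (Ar r)" if "r \<in> R" for r
  proof -
    have r: "r \<in> carrier G" using that R by auto
    have "continuous_map T T (\<lambda>z. r \<otimes> z \<otimes> inv r)"
      using continuous_map_compose[OF lmult_cont[OF r] rmult_cont[of "inv r"]] r
      by (simp add: o_def)
    then show ?thesis unfolding Ar_def using openin_continuous_map_preimage assms(2) by blast
  qed
  have "N = {y \<in> topspace T. \<forall>r\<in>R. y \<in> Ar r}"
  proof (intro equalityI subsetI)
    fix y assume "y \<in> N"
    then show "y \<in> {y \<in> topspace T. \<forall>r\<in>R. y \<in> Ar r}" unfolding N_def Ar_def using R top by auto
  next
    fix y assume y: "y \<in> {y \<in> topspace T. \<forall>r\<in>R. y \<in> Ar r}"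
    have yc: "y \<in> carrier G" using y top by auto
    show "y \<in> N" unfolding N_def
    proof (intro CollectI conjI yc ballI)
      fix x assume x: "x \<in> carrier G"
      then obtain r where r: "r \<in> R" "x \<in> V #> r" using R by auto
      then obtain v where v: "v \<in> V" "x = v \<otimes> r" unfolding r_coset_def by auto
      have rc: "r \<in> carrier G" using r R by auto
      have vc: "v \<in> carrier G" using v Vsub by auto
      have "r \<otimes> y \<otimes> inv r \<in> V" using y r unfolding Ar_def by auto
      then have "v \<otimes> (r \<otimes> y \<otimes> inv r) \<otimes> inv v \<in> V"
        using v subgroup.m_closed[OF assms(1)] subgroup.m_inv_closed[OF assms(1)] by auto
      moreover have "v \<otimes> (r \<otimes> y \<otimes> inv r) \<otimes> inv v = x \<otimes> y \<otimes> inv x"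
        using conj_conj[OF vc rc yc] v by simp
      ultimately show "x \<otimes> y \<otimes> inv x \<in> V" by simp
    qed
  qed
  then have "openin T N" using openin_finite_Inter_pts[OF R(1), of T Ar] Ao by simp
  then show ?thesis using nN NV by blast
qed

lemma separation:
  assumes "Hausdorff_space T" "totally_disconnected_space T" "g \<in> carrier G" "g \<noteq> \<one>"
  shows "\<exists>N. N \<lhd> G \<and> openin T N \<and> g \<notin> N"
proof -
  obtain C where C: "closedin T C" "openin T C" "\<one> \<in> C" "g \<notin> C"
    using clopen_sep[OF assms] by blast
  obtain V where V: "subgroup V G" "openin T V" "V \<subseteq> C"
    using open_subgroup_in_clopen[OF C(1-3)] by blast
  obtain N where "N \<lhd> G" "openin T N" "N \<subseteq> V" using normal_core_open[OF V(1,2)] by blast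
  then show ?thesis using V C by blast
qed


lemma inv_cancel: "b \<in> carrier G \<Longrightarrow> z \<in> carrier G \<Longrightarrow> inv b \<otimes> (b \<otimes> z) = z"
  by (simp add: m_assoc[symmetric])

fun wball :: "'a set \<Rightarrow> nat \<Rightarrow> 'a set" where
  "wball S 0 = {\<one>}"
| "wball S (Suc j) = wball S j \<union> (\<lambda>(b, s). b \<otimes> s) ` (wball S j \<times> (S \<union> (\<lambda>x. inv x) ` S))"

lemma wball_fin: "finite S \<Longrightarrow> finite (wball S j)"
  by (induction j) auto

lemma wball_carrier: "S \<subseteq> carrier G \<Longrightarrow> wball S j \<subseteq> carrier G"
  by (induction j) auto

lemma wball_mono: "i \<le> j \<Longrightarrow> wball S i \<subseteq> wball S j"
proof (induction j)
  case 0
  then show ?case by simp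
next
  case (Suc j)
  then show ?case by (cases "i = Suc j") auto
qed

lemma wball_mult:
  assumes "S \<subseteq> carrier G"
  shows "a \<in> wball S i \<Longrightarrow> b \<in> wball S j \<Longrightarrow> a \<otimes> b \<in> wball S (i + j)"
proof (induction j arbitrary: b)
  case 0
  have "a \<in> carrier G" using 0 wball_carrier[OF assms] by blast
  then show ?case using 0 by simp
next
  case (Suc j)
  from Suc.prems(2) consider "b \<in> wball S j" | b' s where "b' \<in> wball S j" "s \<in> S \<union> (\<lambda>x. inv x) ` S" "b = b' \<otimes> s"
    by auto
  then show ?case
  proof cases
    case 1
    then show ?thesis using Suc.IH[OF Suc.prems(1)] wball_mono[of "i + j" "i + Suc j" S] by auto
  next
    case 2
    have ab: "a \<otimes> b' \<in> wball S (i + j)" using Suc.IH[OF Suc.prems(1) 2(1)] .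
    have c: "a \<in> carrier G" "b' \<in> carrier G" "s \<in> carrier G"
      using Suc.prems(1) 2 wball_carrier[OF assms] assms by auto
    have "a \<otimes> b = (a \<otimes> b') \<otimes> s" using 2 c by (simp add: m_assoc)
    then show ?thesis using ab 2(2) by auto
  qed
qed

lemma wball_gen:
  assumes "S \<subseteq> carrier G"
  shows "s \<in> S \<union> (\<lambda>x. inv x) ` S \<Longrightarrow> s \<in> wball S (Suc 0)"
proof -
  assume s: "s \<in> S \<union> (\<lambda>x. inv x) ` S"
  then have "(\<one>, s) \<in> wball S 0 \<times> (S \<union> (\<lambda>x. inv x) ` S)" using wball.simps(1) by blast
  then have "(\<lambda>(b, s). b \<otimes> s) (\<one>, s) \<in> wball S (Suc 0)"
    unfolding wball.simps(2) by (intro UnI2 imageI)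
  then have "\<one> \<otimes> s \<in> wball S (Suc 0)" by (simp only: split_conv)
  moreover have "s \<in> carrier G" using s assms by auto
  ultimately show ?thesis by (metis l_one)
qed

lemma wball_inv:
  assumes "S \<subseteq> carrier G"
  shows "a \<in> wball S j \<Longrightarrow> inv a \<in> (\<Union>k. wball S k)"
proof (induction j arbitrary: a)
  case 0
  then have "inv a \<in> wball S 0" by simp
  then show ?case by blast
next
  case (Suc j)
  from Suc.prems consider "a \<in> wball S j" | b s where "b \<in> wball S j" "s \<in> S \<union> (\<lambda>x. inv x) ` S" "a = b \<otimes> s"
    by auto
  then show ?case
  proof cases
    case 1
    then show ?thesis using Suc.IH by blast
  next
    case 2
    have c: "b \<in> carrier G" "s \<in> carrier G"
      using 2(1) wball_carrier[OF assms] apply blast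
      using 2(2) assms by blast
    obtain k where k: "inv b \<in> wball S k" using Suc.IH[OF 2(1)] by blast
    have "inv s \<in> S \<union> (\<lambda>x. inv x) ` S"
    proof (cases "s \<in> S")
      case True
      then show ?thesis by blast
    next
      case False
      then obtain t where t: "t \<in> S" "s = inv t" using 2(2) by blast
      then have "inv s = t" using assms by (simp add: subset_iff)
      then show ?thesis using t by blast
    qed
    then have "inv s \<in> wball S (Suc 0)" by (rule wball_gen[OF assms])
    then have m: "inv s \<otimes> inv b \<in> wball S (Suc 0 + k)" by (rule wball_mult[OF assms _ k])
    have "inv a = inv s \<otimes> inv b" unfolding 2(3) by (rule inv_mult_group[OF c])
    then have "inv a \<in> wball S (Suc 0 + k)" using m by simp
    then show ?thesis by (rule UN_I[OF UNIV_I])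
  qed
qed

lemma generate_wball:
  assumes "S \<subseteq> carrier G"
  shows "generate G S \<subseteq> (\<Union>k. wball S k)"
proof (rule generate_subgroup_incl)
  show "S \<subseteq> (\<Union>k. wball S k)"
  proof
    fix s assume s: "s \<in> S"
    then have "\<one> \<otimes> s \<in> wball S (Suc 0)" by force
    moreover have "\<one> \<otimes> s = s" using s assms by auto
    ultimately show "s \<in> (\<Union>k. wball S k)" by (metis UNIV_I UN_iff)
  qed
  show "subgroup (\<Union>k. wball S k) G"
  proof (rule subgroupI)
    show "(\<Union>k. wball S k) \<subseteq> carrier G" using wball_carrier[OF assms] by blast
    have "\<one> \<in> wball S 0" by simp
    then show "(\<Union>k. wball S k) \<noteq> {}" by blast
    show "inv a \<in> (\<Union>k. wball S k)" if "a \<in> (\<Union>k. wball S k)" for a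
      using that wball_inv[OF assms] by blast
    show "a \<otimes> b \<in> (\<Union>k. wball S k)" if "a \<in> (\<Union>k. wball S k)" "b \<in> (\<Union>k. wball S k)" for a b
      using that wball_mult[OF assms] by blast
  qed
qed

lemma rcos_step:
  assumes "S \<subseteq> carrier G" "U \<subseteq> carrier G"
  shows "(\<lambda>b. U #> b) ` wball S (Suc j) =
     (\<lambda>b. U #> b) ` wball S j \<union> (\<lambda>(c, s). c #> s) ` ((\<lambda>b. U #> b) ` wball S j \<times> (S \<union> (\<lambda>x. inv x) ` S))"
proof -
  have S': "S \<union> (\<lambda>x. inv x) ` S \<subseteq> carrier G" using assms by auto
  have ass: "U #> (b \<otimes> s) = (U #> b) #> s" if "b \<in> wball S j" "s \<in> S \<union> (\<lambda>x. inv x) ` S" for b s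
  proof -
    have bc: "b \<in> carrier G" using that(1) wball_carrier[OF assms(1)] by blast
    have sc: "s \<in> carrier G" using that(2) S' by blast
    show ?thesis by (simp add: coset_mult_assoc[OF assms(2) bc sc])
  qed
  show ?thesis
  proof (intro equalityI subsetI)
    fix c assume "c \<in> (\<lambda>b. U #> b) ` wball S (Suc j)"
    then obtain b where b: "b \<in> wball S (Suc j)" "c = U #> b" by blast
    from b(1) consider "b \<in> wball S j" | b' s where "b' \<in> wball S j" "s \<in> S \<union> (\<lambda>x. inv x) ` S" "b = b' \<otimes> s"
      by auto
    then show "c \<in> (\<lambda>b. U #> b) ` wball S j \<union> (\<lambda>(c, s). c #> s) ` ((\<lambda>b. U #> b) ` wball S j \<times> (S \<union> (\<lambda>x. inv x) ` S))"
    proof cases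
      case 1
      then show ?thesis using b by blast
    next
      case 2
      then have "c = (\<lambda>(c, s). c #> s) (U #> b', s)" using b ass by simp
      moreover have "(U #> b', s) \<in> (\<lambda>b. U #> b) ` wball S j \<times> (S \<union> (\<lambda>x. inv x) ` S)" using 2 by blast
      ultimately show ?thesis by blast
    qed
  next
    fix c assume "c \<in> (\<lambda>b. U #> b) ` wball S j \<union> (\<lambda>(c, s). c #> s) ` ((\<lambda>b. U #> b) ` wball S j \<times> (S \<union> (\<lambda>x. inv x) ` S))"
    then consider "c \<in> (\<lambda>b. U #> b) ` wball S j" | b s where "b \<in> wball S j" "s \<in> S \<union> (\<lambda>x. inv x) ` S" "c = (U #> b) #> s"
      by auto
    then show "c \<in> (\<lambda>b. U #> b) ` wball S (Suc j)"
    proof cases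
      case 1
      then show ?thesis by auto
    next
      case 2
      then have "c = U #> (b \<otimes> s)" using ass by simp
      moreover have "b \<otimes> s \<in> wball S (Suc j)" using 2 by force
      ultimately show ?thesis by blast
    qed
  qed
qed

lemma reach:
  assumes S: "S \<subseteq> carrier G" and U: "subgroup U G" and idx: "idx U n"
    and x: "x \<in> wball S k"
  shows "\<exists>b\<in>wball S n. x \<otimes> inv b \<in> U"
proof -
  obtain R where R: "finite R" "card R \<le> n" "R \<subseteq> carrier G" "carrier G = (\<Union>r\<in>R. U #> r)"
    using idx unfolding idx_def by blast
  have Usub: "U \<subseteq> carrier G" using subgroup.subset[OF U] .
  define C where "C = (\<lambda>j. (\<lambda>b. U #> b) ` wball S j)"
  define Fs where "Fs = (\<lambda>Z. Z \<union> (\<lambda>(c, s). c #> s) ` (Z \<times> (S \<union> (\<lambda>x. inv x) ` S)))"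
  have Cs: "C (Suc j) = Fs (C j)" for j unfolding C_def Fs_def using rcos_step[OF S Usub] by simp
  have Cmono: "i \<le> j \<Longrightarrow> C i \<subseteq> C j" for i j unfolding C_def using wball_mono by blast
  have Cfin: "finite (C j)" for j
  proof -
    have "C j \<subseteq> (\<lambda>r. U #> r) ` R"
    proof
      fix c assume "c \<in> C j"
      then obtain b where b: "b \<in> wball S j" "c = U #> b" unfolding C_def by auto
      then have bc: "b \<in> carrier G" using wball_carrier[OF S] by auto
      then obtain r where r: "r \<in> R" "b \<in> U #> r" using R by auto
      have "U #> r = U #> b" using repr_independence[OF r(2) _ U] r R by auto
      then show "c \<in> (\<lambda>r. U #> r) ` R" using b r by auto
    qed
    moreover then have "card (C j) \<le> n"
      using R card_image_le[OF R(1), of "\<lambda>r. U #> r"] card_mono[OF finite_imageI[OF R(1)]] by (meson le_trans)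
    ultimately show ?thesis using R(1) finite_subset by blast
  qed
  have Ccard: "card (C j) \<le> n" for j
  proof -
    have "C j \<subseteq> (\<lambda>r. U #> r) ` R"
    proof
      fix c assume "c \<in> C j"
      then obtain b where b: "b \<in> wball S j" "c = U #> b" unfolding C_def by auto
      then have bc: "b \<in> carrier G" using wball_carrier[OF S] by auto
      then obtain r where r: "r \<in> R" "b \<in> U #> r" using R by auto
      have "U #> r = U #> b" using repr_independence[OF r(2) _ U] r R by auto
      then show "c \<in> (\<lambda>r. U #> r) ` R" using b r by auto
    qed
    then show ?thesis
      using R card_image_le[OF R(1), of "\<lambda>r. U #> r"] card_mono[OF finite_imageI[OF R(1)]] by (meson le_trans)
  qed
  have "\<exists>j\<le>n. C j = C (Suc j)"
  proof (rule ccontr)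
    assume "\<not> (\<exists>j\<le>n. C j = C (Suc j))"
    then have ne: "\<And>j. j \<le> n \<Longrightarrow> C j \<noteq> C (Suc j)" by blast
    have "j \<le> Suc n \<Longrightarrow> card (C j) \<ge> Suc j" for j
    proof (induction j)
      case 0
      have "C 0 = {U #> \<one>}" unfolding C_def by simp
      then show ?case by simp
    next
      case (Suc j)
      have "C j \<subset> C (Suc j)" using Cmono[of j "Suc j"] ne[of j] Suc.prems by auto
      then have "card (C j) < card (C (Suc j))" using psubset_card_mono Cfin by blast
      then show ?case using Suc by simp
    qed
    from this[of "Suc n"] Ccard[of "Suc n"] show False by simp
  qed
  then obtain j where j: "j \<le> n" "C j = C (Suc j)" by blast
  have stab: "C (j + d) = C j" for d
  proof (induction d)
    case 0
    then show ?case by simp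
  next
    case (Suc d)
    have "C (j + Suc d) = Fs (C (j + d))" using Cs by simp
    also have "\<dots> = Fs (C j)" using Suc by simp
    also have "\<dots> = C j" using Cs j(2) by simp
    finally show ?case .
  qed
  have "C k \<subseteq> C n"
  proof (cases "k \<le> j")
    case True
    then show ?thesis using Cmono j(1) by (meson order_trans)
  next
    case False
    then have "C k = C j" using stab[of "k - j"] by simp
    then show ?thesis using Cmono j(1) by simp
  qed
  then have "U #> x \<in> C n" using x unfolding C_def by auto
  then obtain b where b: "b \<in> wball S n" "U #> x = U #> b" unfolding C_def by auto
  have xc: "x \<in> carrier G" "b \<in> carrier G" using x b wball_carrier[OF S] by auto
  have "x \<in> U #> b" using b(2) rcos_self[OF xc(1) U] by simp
  then have "x \<otimes> inv b \<in> U" using subgroup.rcos_module_imp[OF U is_group xc(2)] by simp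
  then show ?thesis using b by blast
qed

lemma open_subgroup_closure:
  assumes "subgroup U G" "openin T U" "T closure_of D = carrier G"
  shows "T closure_of (U \<inter> D) = U"
proof
  have "U \<inter> T closure_of D \<subseteq> T closure_of (U \<inter> D)" using openin_Int_closure_of_subset[OF assms(2)] .
  then show "U \<subseteq> T closure_of (U \<inter> D)" using assms(3) subgroup.subset[OF assms(1)] by auto
  have "T closure_of (U \<inter> D) \<subseteq> T closure_of U" by (rule closure_of_mono) auto
  then show "T closure_of (U \<inter> D) \<subseteq> U"
    using closure_of_closedin[OF open_subgroup_closed[OF assms(1,2)]] by simp
qed

lemma conj_identity: "y \<in> carrier G \<Longrightarrow> s \<in> carrier G \<Longrightarrow> b \<in> carrier G \<Longrightarrow> b' \<in> carrier G \<Longrightarrow>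
   (y \<otimes> inv b) \<otimes> ((b \<otimes> s) \<otimes> inv b') = (y \<otimes> s) \<otimes> inv b'"
  by (simp add: m_assoc inv_cancel)

lemma same_on_D:
  assumes S: "S \<subseteq> carrier G" and U: "subgroup U G" "idx U n"
    and U': "subgroup U' G"
    and Y: "U \<inter> (\<lambda>(x, y). x \<otimes> inv y) ` (wball S (Suc n) \<times> wball S n)
          = U' \<inter> (\<lambda>(x, y). x \<otimes> inv y) ` (wball S (Suc n) \<times> wball S n)"
    and x: "x \<in> U" "x \<in> generate G S"
  shows "x \<in> U'"
proof -
  let ?Y = "(\<lambda>(x, y). x \<otimes> inv y) ` (wball S (Suc n) \<times> wball S n)"
  have one_n: "\<one> \<in> wball S n" using wball_mono[of 0 n S] by auto
  have Q: "\<exists>b\<in>wball S n. z \<otimes> inv b \<in> U \<and> z \<otimes> inv b \<in> U'" if "z \<in> wball S j" for z j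
    using that
  proof (induction j arbitrary: z)
    case 0
    then have "z \<otimes> inv \<one> \<in> U \<and> z \<otimes> inv \<one> \<in> U'"
      using subgroup.one_closed[OF U(1)] subgroup.one_closed[OF U'] by simp
    then show ?case using one_n by blast
  next
    case (Suc j)
    from Suc.prems consider "z \<in> wball S j" | y s where "y \<in> wball S j" "s \<in> S \<union> (\<lambda>x. inv x) ` S" "z = y \<otimes> s"
      by auto
    then show ?case
    proof cases
      case 1
      then show ?thesis using Suc.IH by blast
    next
      case 2
      obtain b where b: "b \<in> wball S n" "y \<otimes> inv b \<in> U" "y \<otimes> inv b \<in> U'" using Suc.IH[OF 2(1)] by blast
      have bs: "b \<otimes> s \<in> wball S (Suc n)" using b(1) 2(2) by auto
      obtain b' where b': "b' \<in> wball S n" "(b \<otimes> s) \<otimes> inv b' \<in> U"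
        using reach[OF S U(1) U(2) bs] by blast
      have "(b \<otimes> s) \<otimes> inv b' \<in> ?Y" using bs b'(1) by force
      then have b'U': "(b \<otimes> s) \<otimes> inv b' \<in> U'" using Y b'(2) by blast
      have c: "y \<in> carrier G" "s \<in> carrier G" "b \<in> carrier G" "b' \<in> carrier G"
        using 2 b b' wball_carrier[OF S] S by auto
      have eq: "z \<otimes> inv b' = (y \<otimes> inv b) \<otimes> ((b \<otimes> s) \<otimes> inv b')"
        using conj_identity[OF c] 2(3) by simp
      show ?thesis using eq b b' b'U' subgroup.m_closed[OF U(1)] subgroup.m_closed[OF U'] by metis
    qed
  qed
  obtain j where "x \<in> wball S j" using generate_wball[OF S] x(2) by blast
  then obtain b where b: "b \<in> wball S n" "x \<otimes> inv b \<in> U" "x \<otimes> inv b \<in> U'" using Q by blast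
  have c: "x \<in> carrier G" "b \<in> carrier G" using x b wball_carrier[OF S] subgroup.subset[OF U(1)] by auto
  have "b = inv (x \<otimes> inv b) \<otimes> x" using c by (simp add: inv_mult_group m_assoc)
  then have bU: "b \<in> U" using b x subgroup.m_closed[OF U(1)] subgroup.m_inv_closed[OF U(1)] by metis
  have "b \<otimes> inv \<one> \<in> ?Y" using b(1) one_n wball_mono[of n "Suc n" S] by force
  then have "b \<in> ?Y" using c by simp
  then have "b \<in> U'" using Y bU by blast
  moreover have "x = (x \<otimes> inv b) \<otimes> b" using c by (simp add: m_assoc)
  ultimately show ?thesis using b subgroup.m_closed[OF U'] by metis
qed

lemma finite_X:
  assumes S: "finite S" "S \<subseteq> carrier G" and dense: "T closure_of (generate G S) = carrier G"
  shows "finite {U. U \<lhd> G \<and> openin T U \<and> idx U n}"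
proof -
  let ?Y = "(\<lambda>(x, y). x \<otimes> inv y) ` (wball S (Suc n) \<times> wball S n)"
  let ?X = "{U. U \<lhd> G \<and> openin T U \<and> idx U n}"
  have inj: "inj_on (\<lambda>U. U \<inter> ?Y) ?X"
  proof (rule inj_onI)
    fix U U' assume U: "U \<in> ?X" and U': "U' \<in> ?X" and eq: "U \<inter> ?Y = U' \<inter> ?Y"
    have sU: "subgroup U G" "subgroup U' G" using U U' normal_imp_subgroup by auto
    have "U \<inter> generate G S = U' \<inter> generate G S"
      using same_on_D[OF S(2) sU(1) _ sU(2) eq] same_on_D[OF S(2) sU(2) _ sU(1) eq[symmetric]] U U'
      by blast
    then show "U = U'"
      using open_subgroup_closure[OF sU(1) _ dense] open_subgroup_closure[OF sU(2) _ dense] U U'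
      by (metis (no_types, lifting) mem_Collect_eq)
  qed
  have fY: "finite ?Y"
    using finite_imageI[OF finite_cartesian_product[OF wball_fin[OF S(1)] wball_fin[OF S(1)]]] by blast
  show ?thesis using inj_on_finite[OF inj, of "Pow ?Y"] fY by auto
qed


lemma inv_cancel2: "b \<in> carrier G \<Longrightarrow> z \<in> carrier G \<Longrightarrow> b \<otimes> (inv b \<otimes> z) = z"
  by (simp add: m_assoc[symmetric])

lemma idx_mono: "idx U a \<Longrightarrow> a \<le> b \<Longrightarrow> idx U b"
  unfolding idx_def by (meson le_trans)

lemma kernel_bound:
  assumes Haus: "Hausdorff_space T" and td: "totally_disconnected_space T"
    and S: "finite S" "S \<subseteq> carrier G" and dense: "T closure_of (generate G S) = carrier G"
    and H: "subgroup H G" and Hfin: "finite (rcosets H)"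
    and \<alpha>H: "\<And>x. x \<in> carrier G \<Longrightarrow> \<alpha> x \<in> H"
    and \<alpha>m: "\<And>x y. x \<in> carrier G \<Longrightarrow> y \<in> carrier G \<Longrightarrow> \<alpha> (x \<otimes> y) = \<alpha> x \<otimes> \<alpha> y"
    and cont: "continuous_map T (subtopology T H) \<alpha>"
    and surj: "\<alpha> ` carrier G = H"
    and F: "finite F" "F \<subseteq> carrier G" "\<And>x. x \<in> F \<Longrightarrow> \<alpha> x = \<one>"
  shows "card F \<le> card (rcosets H)"
proof -
  have Hsub: "H \<subseteq> carrier G" using subgroup.subset[OF H] .
  have \<alpha>c: "\<And>x. x \<in> carrier G \<Longrightarrow> \<alpha> x \<in> carrier G" using \<alpha>H Hsub by blast
  have gh: "group_hom G G \<alpha>"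
    by (intro group_hom.intro group_hom_axioms.intro is_group homI) (auto simp: \<alpha>c \<alpha>m)
  have \<alpha>1: "\<alpha> \<one> = \<one>" using group_hom.hom_one[OF gh] by simp
  have \<alpha>i: "\<And>x. x \<in> carrier G \<Longrightarrow> \<alpha> (inv x) = inv (\<alpha> x)" using group_hom.hom_inv[OF gh] by simp
  define P where "P = {(x, y). x \<in> F \<and> y \<in> F \<and> x \<noteq> y}"
  have "P \<subseteq> F \<times> F" unfolding P_def by auto
  then have Pfin: "finite P" using finite_cartesian_product[OF F(1) F(1)] finite_subset by blast
  have sep: "\<forall>p\<in>P. \<exists>U k. U \<lhd> G \<and> openin T U \<and> idx U k \<and> fst p \<otimes> inv (snd p) \<notin> U"
  proof
    fix p assume "p \<in> P"
    then obtain x y where xy: "p = (x, y)" "x \<in> F" "y \<in> F" "x \<noteq> y" unfolding P_def by auto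
    have c: "x \<in> carrier G" "y \<in> carrier G" using xy F(2) by auto
    have ne: "x \<otimes> inv y \<noteq> \<one>"
    proof
      assume "x \<otimes> inv y = \<one>"
      then have "inv (inv y) = x" using inv_equality[of x "inv y"] c by simp
      then show False using xy c by simp
    qed
    obtain U where U: "U \<lhd> G" "openin T U" "x \<otimes> inv y \<notin> U"
      using separation[OF Haus td _ ne] c by auto
    obtain k where "idx U k" using open_subgroup_idx[OF normal_imp_subgroup[OF U(1)] U(2)] by blast
    then show "\<exists>U k. U \<lhd> G \<and> openin T U \<and> idx U k \<and> fst p \<otimes> inv (snd p) \<notin> U"
      using U xy by auto
  qed
  then obtain Uf kf where Ukf: "\<And>p. p \<in> P \<Longrightarrow> Uf p \<lhd> G \<and> openin T (Uf p) \<and> idx (Uf p) (kf p) \<and> fst p \<otimes> inv (snd p) \<notin> Uf p"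
    by metis
  define n where "n = (\<Sum>p\<in>P. kf p)"
  have kn: "\<And>p. p \<in> P \<Longrightarrow> kf p \<le> n"
    unfolding n_def by (rule member_le_sum) (use Pfin in auto)
  define Xs where "Xs = {U. U \<lhd> G \<and> openin T U \<and> idx U n}"
  have Xsfin: "finite Xs" unfolding Xs_def using finite_X[OF S dense] .
  have sgXs: "\<And>U. U \<in> Xs \<Longrightarrow> subgroup U G" unfolding Xs_def using normal_imp_subgroup by auto
  define N where "N = {x \<in> topspace T. \<forall>U\<in>Xs. x \<in> U}"
  have Nopen: "openin T N" unfolding N_def
    by (rule openin_finite_Inter_pts[OF Xsfin]) (simp add: Xs_def)
  have NXs: "\<And>U. U \<in> Xs \<Longrightarrow> N \<subseteq> U" unfolding N_def by auto
  have Nc: "N \<subseteq> carrier G" unfolding N_def using top by auto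
  have Nnormal: "N \<lhd> G"
    unfolding normal_inv_iff
  proof (intro conjI ballI)
    show "subgroup N G"
    proof (rule subgroupI)
      show "N \<subseteq> carrier G" by (rule Nc)
      have "\<one> \<in> N" unfolding N_def using top sgXs subgroup.one_closed by auto
      then show "N \<noteq> {}" by blast
      show "inv a \<in> N" if aN: "a \<in> N" for a
      proof -
        have "inv a \<in> U" if UX: "U \<in> Xs" for U
        proof -
          have "a \<in> U" using aN UX unfolding N_def by auto
          then show ?thesis by (rule subgroup.m_inv_closed[OF sgXs[OF UX]])
        qed
        then show ?thesis unfolding N_def using aN Nc top by auto
      qed
      show "a \<otimes> b \<in> N" if aN: "a \<in> N" and bN: "b \<in> N" for a b
      proof -
        have "a \<otimes> b \<in> U" if UX: "U \<in> Xs" for U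
        proof -
          have "a \<in> U" "b \<in> U" using aN bN UX unfolding N_def by auto
          then show ?thesis by (rule subgroup.m_closed[OF sgXs[OF UX]])
        qed
        then show ?thesis unfolding N_def using aN bN Nc top by auto
      qed
    qed
  next
    fix x h assume x: "x \<in> carrier G" and h: "h \<in> N"
    have "x \<otimes> h \<otimes> inv x \<in> U" if "U \<in> Xs" for U
      using normal.inv_op_closed2[of U G x h] that x h unfolding Xs_def N_def by auto
    then show "x \<otimes> h \<otimes> inv x \<in> N" unfolding N_def using top x h Nc by auto
  qed
  have sgN: "subgroup N G" using normal_imp_subgroup[OF Nnormal] .
  obtain nN where "idx N nN" using open_subgroup_idx[OF sgN Nopen] by blast
  then obtain RN where RN: "finite RN" "RN \<subseteq> carrier G" "carrier G = (\<Union>r\<in>RN. N #> r)"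
    unfolding idx_def by blast
  have pre: "{y \<in> carrier G. \<alpha> y \<in> U} \<in> Xs" if UX: "U \<in> Xs" for U
  proof -
    have Un: "U \<lhd> G" "openin T U" "idx U n" using UX Xs_def by auto
    have sgU: "subgroup U G" using normal_imp_subgroup[OF Un(1)] .
    define PU where "PU = {y \<in> carrier G. \<alpha> y \<in> U}"
    have PUc: "PU \<subseteq> carrier G" unfolding PU_def by auto
    have sgPU: "subgroup PU G"
    proof (rule subgroupI)
      show "PU \<subseteq> carrier G" by (rule PUc)
      have "\<one> \<in> PU" unfolding PU_def using \<alpha>1 subgroup.one_closed[OF sgU] by auto
      then show "PU \<noteq> {}" by blast
      show "inv a \<in> PU" if "a \<in> PU" for a
        using that \<alpha>i subgroup.m_inv_closed[OF sgU] unfolding PU_def by auto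
      show "a \<otimes> b \<in> PU" if "a \<in> PU" "b \<in> PU" for a b
        using that \<alpha>m subgroup.m_closed[OF sgU] unfolding PU_def by auto
    qed
    have nPU: "PU \<lhd> G" unfolding normal_inv_iff
    proof (intro conjI sgPU ballI)
      fix x h assume x: "x \<in> carrier G" and h: "h \<in> PU"
      have hc: "h \<in> carrier G" using h PU_def by auto
      have "\<alpha> (x \<otimes> h \<otimes> inv x) = \<alpha> x \<otimes> \<alpha> h \<otimes> inv (\<alpha> x)" using x hc \<alpha>m \<alpha>i by simp
      moreover have "\<alpha> x \<otimes> \<alpha> h \<otimes> inv (\<alpha> x) \<in> U"
        using normal.inv_op_closed2[OF Un(1) \<alpha>c[OF x]] h PU_def by auto
      ultimately show "x \<otimes> h \<otimes> inv x \<in> PU" unfolding PU_def using x hc by simp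
    qed
    have oPU: "openin T PU"
    proof -
      have "openin (subtopology T H) (H \<inter> U)" using openin_subtopology_Int2[OF Un(2)] .
      from openin_continuous_map_preimage[OF cont this]
      have "openin T {x \<in> topspace T. \<alpha> x \<in> H \<inter> U}" .
      moreover have "{x \<in> topspace T. \<alpha> x \<in> H \<inter> U} = PU" unfolding PU_def using top \<alpha>H by auto
      ultimately show ?thesis by simp
    qed
    have iPU: "idx PU n"
    proof -
      obtain R where R: "finite R" "card R \<le> n" "R \<subseteq> carrier G" "carrier G = (\<Union>r\<in>R. U #> r)"
        using Un(3) unfolding idx_def by blast
      define R0 where "R0 = {r \<in> R. \<exists>g\<in>carrier G. \<alpha> g \<in> U #> r}"
      define gs where "gs = (\<lambda>r. SOME g. g \<in> carrier G \<and> \<alpha> g \<in> U #> r)"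
      have gs: "gs r \<in> carrier G \<and> \<alpha> (gs r) \<in> U #> r" if "r \<in> R0" for r
      proof -
        have "\<exists>g. g \<in> carrier G \<and> \<alpha> g \<in> U #> r" using that R0_def by blast
        then show ?thesis unfolding gs_def by (rule someI_ex)
      qed
      have R0R: "R0 \<subseteq> R" unfolding R0_def by auto
      have R0fin: "finite R0" using finite_subset[OF R0R R(1)] .
      have R'fin: "finite (gs ` R0)" using R0fin by auto
      have R'card: "card (gs ` R0) \<le> n"
        using card_image_le[OF R0fin, of gs] card_mono[OF R(1) R0R] R(2) by linarith
      have R'c: "gs ` R0 \<subseteq> carrier G" using gs by auto
      have cover: "carrier G = (\<Union>r\<in>gs ` R0. PU #> r)"
      proof (intro equalityI subsetI)
        fix x assume x: "x \<in> carrier G"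
        then have "\<alpha> x \<in> carrier G" by (rule \<alpha>c)
        then obtain r where r: "r \<in> R" "\<alpha> x \<in> U #> r" using R(4) by blast
        then have r0: "r \<in> R0" unfolding R0_def using x by blast
        define g where "g = gs r"
        have g: "g \<in> carrier G" "\<alpha> g \<in> U #> r" using gs[OF r0] g_def by auto
        have rc: "r \<in> carrier G" using r R(3) by auto
        have "U #> r = U #> \<alpha> g" using repr_independence[OF g(2) rc sgU] .
        then have "\<alpha> x \<in> U #> \<alpha> g" using r by simp
        then have "\<alpha> x \<otimes> inv (\<alpha> g) \<in> U"
          using subgroup.rcos_module_imp[OF sgU is_group \<alpha>c[OF g(1)]] by simp
        moreover have "\<alpha> (x \<otimes> inv g) = \<alpha> x \<otimes> inv (\<alpha> g)" using x g \<alpha>m \<alpha>i by simp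
        ultimately have "x \<otimes> inv g \<in> PU" unfolding PU_def using x g by simp
        then have "x \<in> PU #> g" using subgroup.rcos_module_rev[OF sgPU is_group g(1) x] by simp
        then show "x \<in> (\<Union>r\<in>gs ` R0. PU #> r)" using r0 g_def by blast
      next
        fix x assume "x \<in> (\<Union>r\<in>gs ` R0. PU #> r)"
        then show "x \<in> carrier G" using R'c r_coset_subset_G[OF PUc] by blast
      qed
      show ?thesis unfolding idx_def using R'fin R'card R'c cover by blast
    qed
    show ?thesis unfolding Xs_def using nPU oPU iPU PU_def by simp
  qed
  have \<alpha>N: "\<alpha> x \<in> N" if xN: "x \<in> N" for x
  proof -
    have xc: "x \<in> carrier G" using xN Nc by auto
    have allx: "\<forall>V\<in>Xs. x \<in> V" using xN unfolding N_def by simp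
    have inU: "\<alpha> x \<in> U" if UX: "U \<in> Xs" for U
    proof -
      have "x \<in> {y \<in> carrier G. \<alpha> y \<in> U}" using allx pre[OF UX] by (rule bspec)
      then show ?thesis by simp
    qed
    have "\<alpha> x \<in> topspace T" using \<alpha>c[OF xc] top by simp
    then show ?thesis unfolding N_def using inU by simp
  qed
  have sepN: "x \<otimes> inv y \<notin> N" if "x \<in> F" "y \<in> F" "x \<noteq> y" for x y
  proof -
    have p: "(x, y) \<in> P" unfolding P_def using that by auto
    have "Uf (x, y) \<in> Xs" unfolding Xs_def using Ukf[OF p] idx_mono kn[OF p] by auto
    then show ?thesis using NXs Ukf[OF p] by auto
  qed
  define Q where "Q = rcosets N"
  have Qsub: "Q \<subseteq> (\<lambda>r. N #> r) ` RN"
  proof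
    fix c assume "c \<in> Q"
    then obtain g where g: "g \<in> carrier G" "c = N #> g" unfolding Q_def RCOSETS_def by auto
    then obtain r where r: "r \<in> RN" "g \<in> N #> r" using RN(3) by blast
    have "N #> r = N #> g" using repr_independence[OF r(2) _ sgN] r RN(2) by auto
    then show "c \<in> (\<lambda>r. N #> r) ` RN" using g r by auto
  qed
  have Qfin: "finite Q" using finite_subset[OF Qsub] RN(1) by auto
  define Im where "Im = (\<lambda>h. N #> h) ` H"
  have ImQ: "Im \<subseteq> Q" unfolding Im_def Q_def using Hsub rcosetsI[OF Nc] by auto
  have Imfin: "finite Im" using finite_subset[OF ImQ Qfin] .
  have Imne: "Im \<noteq> {}" unfolding Im_def using subgroup.one_closed[OF H] by auto
  define sr where "sr = (\<lambda>y. SOME g. g \<in> carrier G \<and> N #> \<alpha> g = y)"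
  have sr: "sr y \<in> carrier G \<and> N #> \<alpha> (sr y) = y" if "y \<in> Im" for y
  proof -
    from that obtain h where h: "h \<in> H" "y = N #> h" unfolding Im_def by auto
    then obtain g where "g \<in> carrier G" "\<alpha> g = h" using surj by auto
    then have "\<exists>g. g \<in> carrier G \<and> N #> \<alpha> g = y" using h by blast
    then show ?thesis unfolding sr_def by (rule someI_ex)
  qed
  define \<Psi> where "\<Psi> = (\<lambda>(k, y). N #> (k \<otimes> sr y))"
  have \<Psi>Q: "\<Psi> ` (F \<times> Im) \<subseteq> Q"
    unfolding \<Psi>_def Q_def using sr F(2) rcosetsI[OF Nc] by auto
  have \<Psi>inj: "inj_on \<Psi> (F \<times> Im)"
  proof (rule inj_onI)
    fix p q assume p: "p \<in> F \<times> Im" and q: "q \<in> F \<times> Im" and eq: "\<Psi> p = \<Psi> q"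
    obtain k y where kp: "p = (k, y)" "k \<in> F" "y \<in> Im" using p by auto
    obtain k' y' where kq: "q = (k', y')" "k' \<in> F" "y' \<in> Im" using q by auto
    define g where "g = sr y"
    define g' where "g' = sr y'"
    have g: "g \<in> carrier G" "N #> \<alpha> g = y" using sr[OF kp(3)] g_def by auto
    have g': "g' \<in> carrier G" "N #> \<alpha> g' = y'" using sr[OF kq(3)] g'_def by auto
    have kc: "k \<in> carrier G" "k' \<in> carrier G" using kp kq F(2) by auto
    have e: "N #> (k \<otimes> g) = N #> (k' \<otimes> g')" using eq kp kq unfolding \<Psi>_def g_def g'_def by simp
    have "k \<otimes> g \<in> N #> (k \<otimes> g)" using rcos_self[OF _ sgN] kc g by simp
    then have "k \<otimes> g \<in> N #> (k' \<otimes> g')" using e by simp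
    then have z: "(k \<otimes> g) \<otimes> inv (k' \<otimes> g') \<in> N"
      using subgroup.rcos_module_imp[OF sgN is_group] kc g' by simp
    have "\<alpha> ((k \<otimes> g) \<otimes> inv (k' \<otimes> g')) \<in> N" using \<alpha>N[OF z] .
    moreover have "\<alpha> ((k \<otimes> g) \<otimes> inv (k' \<otimes> g')) = \<alpha> g \<otimes> inv (\<alpha> g')"
      using kc g g' \<alpha>m \<alpha>i \<alpha>c F(3)[OF kp(2)] F(3)[OF kq(2)] by (simp add: inv_mult_group)
    ultimately have "\<alpha> g \<otimes> inv (\<alpha> g') \<in> N" by simp
    then have "\<alpha> g \<in> N #> \<alpha> g'"
      using subgroup.rcos_module_rev[OF sgN is_group \<alpha>c[OF g'(1)] \<alpha>c[OF g(1)]] by simp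
    then have "N #> \<alpha> g' = N #> \<alpha> g" using repr_independence[OF _ \<alpha>c[OF g'(1)] sgN] by simp
    then have yy: "y = y'" using g g' by simp
    then have gg: "g = g'" using g_def g'_def by simp
    then have "(k \<otimes> g) \<otimes> inv (k' \<otimes> g) \<in> N" using z by simp
    moreover have "(k \<otimes> g) \<otimes> inv (k' \<otimes> g) = k \<otimes> inv k'"
      using kc g by (simp add: m_assoc inv_mult_group inv_cancel2)
    ultimately have "k \<otimes> inv k' \<in> N" by simp
    then have "k = k'" using sepN kp kq by blast
    then show "p = q" using kp kq yy by simp
  qed
  have c1: "card F * card Im \<le> card Q"
    using card_inj_on_le[OF \<Psi>inj \<Psi>Q Qfin] by (simp add: card_cartesian_product)
  define rep :: "'a set \<Rightarrow> 'a" where "rep = (\<lambda>c. SOME r. r \<in> c)"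
  have Qcov: "Q \<subseteq> (\<lambda>(y, c). y #> rep c) ` (Im \<times> rcosets H)"
  proof
    fix q assume "q \<in> Q"
    then obtain g where g: "g \<in> carrier G" "q = N #> g" unfolding Q_def RCOSETS_def by auto
    define c where "c = H #> g"
    have cH: "c \<in> rcosets H" unfolding c_def using rcosetsI[OF Hsub g(1)] .
    have "g \<in> c" unfolding c_def using rcos_self[OF g(1) H] .
    then have r0: "rep c \<in> c" unfolding rep_def by (rule someI)
    define r0 where "r0 = rep c"
    have r0c: "r0 \<in> carrier G" using r0 r0_def c_def r_coset_subset_G[OF Hsub g(1)] by auto
    have hH: "r0 \<otimes> inv g \<in> H"
      using subgroup.rcos_module_imp[OF H is_group g(1)] r0 r0_def c_def by simp
    define h where "h = inv (r0 \<otimes> inv g)"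
    have hH': "h \<in> H" unfolding h_def using subgroup.m_inv_closed[OF H hH] .
    have hc: "h \<in> carrier G" using hH' Hsub by auto
    have gh: "g = h \<otimes> r0" unfolding h_def using g(1) r0c by (simp add: inv_mult_group m_assoc)
    have "q = (N #> h) #> r0" using g gh coset_mult_assoc[OF Nc hc r0c] by simp
    moreover have "N #> h \<in> Im" unfolding Im_def using hH' by blast
    ultimately show "q \<in> (\<lambda>(y, c). y #> rep c) ` (Im \<times> rcosets H)"
      using cH r0_def by force
  qed
  have c2: "card Q \<le> card Im * card (rcosets H)"
  proof -
    have "card Q \<le> card ((\<lambda>(y, c). y #> rep c) ` (Im \<times> rcosets H))"
      using card_mono[OF _ Qcov] Imfin Hfin by auto
    also have "\<dots> \<le> card (Im \<times> rcosets H)" by (rule card_image_le) (use Imfin Hfin in auto)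
    finally show ?thesis by (simp add: card_cartesian_product)
  qed
  have "card F * card Im \<le> card (rcosets H) * card Im"
    using order_trans[OF c1 c2] by (metis mult.commute)
  moreover have "card Im > 0" using Imfin Imne by (simp add: card_gt_0_iff)
  ultimately show ?thesis by simp
qed

end

theorem proposition3p2:
  fixes G :: "('a, 'm) monoid_scheme" and T :: "'a topology"
    and H :: "'a set" and \<alpha> :: "'a \<Rightarrow> 'a"
  assumes "profinite_group G T"
    and "topologically_fg G T"
    and "subgroup H G"
    and "finite (rcosets\<^bsub>G\<^esub> H)"
    and "\<alpha> \<in> hom G (G\<lparr>carrier := H\<rparr>)"
    and "continuous_map T (subtopology T H) \<alpha>"
    and "\<alpha> ` carrier G = H"
  shows "finite (kernel G (G\<lparr>carrier := H\<rparr>) \<alpha>)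
    \<and> ((\<forall>N. N \<lhd> G \<and> finite N \<longrightarrow> N = {\<one>\<^bsub>G\<^esub>}) \<longrightarrow> inj_on \<alpha> (carrier G))"
proof -
  have tg: "topological_group G T" "compact_space T" "Hausdorff_space T" "totally_disconnected_space T"
    using assms(1) unfolding profinite_group_def by auto
  then have grp: "group G" and tsp: "topspace T = carrier G"
    and mc: "continuous_map (prod_topology T T) T (\<lambda>(x, y). x \<otimes>\<^bsub>G\<^esub> y)"
    and ic: "continuous_map T T (\<lambda>x. inv\<^bsub>G\<^esub> x)"
    unfolding topological_group_def by auto
  interpret cgrp G T
    by (intro cgrp.intro cgrp_axioms.intro grp tsp mc ic tg(2))
  obtain S where S: "finite S" "S \<subseteq> carrier G" "T closure_of generate G S = carrier G"
    using assms(2) unfolding topologically_fg_def by blast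
  have \<alpha>H: "\<And>x. x \<in> carrier G \<Longrightarrow> \<alpha> x \<in> H"
    and \<alpha>m: "\<And>x y. x \<in> carrier G \<Longrightarrow> y \<in> carrier G \<Longrightarrow> \<alpha> (x \<otimes>\<^bsub>G\<^esub> y) = \<alpha> x \<otimes>\<^bsub>G\<^esub> \<alpha> y"
    using assms(5) unfolding hom_def by auto
  define K where "K = kernel G (G\<lparr>carrier := H\<rparr>) \<alpha>"
  have K: "K = {x \<in> carrier G. \<alpha> x = \<one>\<^bsub>G\<^esub>}" unfolding K_def kernel_def by simp
  have fin: "finite K"
  proof (rule ccontr)
    assume "infinite K"
    then obtain F where F: "finite F" "card F = Suc (card (rcosets\<^bsub>G\<^esub> H))" "F \<subseteq> K"
      using infinite_arbitrarily_large by blast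
    have "card F \<le> card (rcosets\<^bsub>G\<^esub> H)"
      using kernel_bound[OF tg(3) tg(4) S assms(3) assms(4) \<alpha>H \<alpha>m assms(6) assms(7) F(1)] F(3) K by auto
    then show False using F(2) by simp
  qed
  moreover have "(\<forall>N. N \<lhd> G \<and> finite N \<longrightarrow> N = {\<one>\<^bsub>G\<^esub>}) \<longrightarrow> inj_on \<alpha> (carrier G)"
  proof
    assume A: "\<forall>N. N \<lhd> G \<and> finite N \<longrightarrow> N = {\<one>\<^bsub>G\<^esub>}"
    have gh2: "group_hom G (G\<lparr>carrier := H\<rparr>) \<alpha>"
      using group_hom.intro[OF grp subgroup_imp_group[OF assms(3)]] assms(5) group_hom_axioms.intro by blast
    have "K \<lhd> G" unfolding K_def using group_hom.normal_kernel[OF gh2] .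
    then have "K = {\<one>\<^bsub>G\<^esub>}" using A fin by blast
    then show "inj_on \<alpha> (carrier G)"
      using group_hom.inj_on_one_iff[OF gh2] K by auto
  qed
  ultimately show ?thesis unfolding K_def by blast
qed

end
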